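(* Let $\pi$ and $\mu$ be probability measures on $\mathbb{R}^d$ with $\mathrm{d}\pi(x)\propto\ell(x)\,\mathrm{d}\mu(x)$ for some integrable $\ell:\mathbb{R}^d\to\mathbb{R}_{\geq0}$, and let $\varphi_r:\mathbb{R}^d\to\mathbb{R}^r$ be any measurable feature map. For $\alpha\in(0,1]$ let $\ell_{\alpha,r}^{\mathrm{opt}}(\theta_r)=\mathbb{E}_{X\sim\mu}[\ell(X)^\alpha\mid\varphi_r(X)=\theta_r]^{1/\alpha}$ and $\mathrm{d}\pi_{\alpha,r}^{\mathrm{opt}}(x)\propto\ell_{\alpha,r}^{\mathrm{opt}}(\varphi_r(x))\,\mathrm{d}\mu(x)$. Then for any $0<\alpha\leq 1$, $$D_\alpha(\pi\,\|\,\pi_{\alpha,r}^{\mathrm{opt}})\leq D_\alpha(\pi\,\|\,\pi_{1,r}^{\mathrm{opt}})\leq\frac{1}{\alpha}D_\alpha(\pi\,\|\,\pi_{\alpha,r}^{\mathrm{opt}}).$$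
   Context: For $\alpha\in\mathbb{R}$, the Amari $\alpha$-divergence is $D_\alpha(\nu\|\mu)=\int\phi_\alpha\big(\frac{\mathrm{d}\nu}{\mathrm{d}\mu}\big)\mathrm{d}\mu$ with $\phi_\alpha(t)=\frac{t^\alpha-1}{\alpha(\alpha-1)}-\frac{t-1}{\alpha-1}$ for $\alpha\notin\{0,1\}$ and $\phi_1(t)=t\ln t-t+1$ (the KL divergence). Conditional expectations are taken with respect to the disintegration of $\mu$ given $\varphi_r(X)=\theta_r$. *)

theory Defs
  imports "HOL-Probability.Probability"
begin

text \<open>Amari alpha-divergence generator. The case a = 0 (not used) is set to its limit.\<close>
definition phi_alpha :: "real \<Rightarrow> real \<Rightarrow> real" where
  "phi_alpha a t =
     (if a = 1 then t * ln t - t + 1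
      else if a = 0 then t - 1 - ln t
      else (t powr a - 1) / (a * (a - 1)) - (t - 1) / (a - 1))"

text \<open>D_a(nu || mu) = integral of phi_a(d nu / d mu) d mu, as an extended nonnegative real
  (phi_a is nonnegative on [0,inf) for a > 0, so the value may be +infinity, e.g. KL).\<close>
definition alpha_div :: "real \<Rightarrow> 'a measure \<Rightarrow> 'a measure \<Rightarrow> ennreal" where
  "alpha_div a \<nu> \<mu> = (\<integral>\<^sup>+ x. ennreal (phi_alpha a (enn2real (RN_deriv \<mu> \<nu> x))) \<partial>\<mu>)"

text \<open>Optimal likelihood evaluated at the features: x \<mapsto> E[l(X)^a | phi(X)](x)^(1/a),
  the conditional expectation taken w.r.t. the sigma-algebra generated by the feature map.\<close>
definition l_opt :: "'a measure \<Rightarrow> ('a \<Rightarrow> 'b::topological_space) \<Rightarrow> ('a \<Rightarrow> real) \<Rightarrow> real \<Rightarrow> 'a \<Rightarrow> real" where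
  "l_opt \<mu> \<phi> l a x =
     (max 0 (real_cond_exp \<mu> (vimage_algebra (space \<mu>) \<phi> borel) (\<lambda>y. l y powr a) x)) powr (1 / a)"

definition pi_opt :: "'a measure \<Rightarrow> ('a \<Rightarrow> 'b::topological_space) \<Rightarrow> ('a \<Rightarrow> real) \<Rightarrow> real \<Rightarrow> 'a measure" where
  "pi_opt \<mu> \<phi> l a =
     density \<mu> (\<lambda>x. ennreal (l_opt \<mu> \<phi> l a x / (\<integral>y. l_opt \<mu> \<phi> l a y \<partial>\<mu>)))"

end

theory Submission
  imports Defs
begin

lemma young0:
  fixes x y t :: real
  assumes "0 \<le> x" "0 \<le> y" "0 < t" "t < 1"
  shows "x powr t * y powr (1 - t) \<le> t * x + (1 - t) * y"
proof (cases "x = 0 \<or> y = 0")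
  case True
  then show ?thesis using assms by auto
next
  case False
  then show ?thesis using Youngs_inequality_0[of t "1-t" x y] assms by auto
qed

lemma phi_eq:
  assumes "0 < a" "a < 1"
  shows "phi_alpha a t = (t powr a - 1) / (a * (a - 1)) - (t - 1) / (a - 1)"
  using assms by (simp add: phi_alpha_def)

lemma q_phi:
  fixes p q a :: real
  assumes "0 < a" "a < 1" "0 \<le> p" "0 \<le> q" "q = 0 \<longrightarrow> p = 0"
  shows "q * phi_alpha a (if q = 0 then 0 else p / q) =
     (q - p powr a * q powr (1 - a)) / (a * (1 - a)) + (p - q) / (1 - a)"
proof (cases "q = 0")
  case True
  then show ?thesis using assms by simp
next
  case False
  then have qp: "q > 0" using assms by auto
  have e1: "q * (p / q) powr a = p powr a * q powr (1 - a)"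
    using qp by (simp add: powr_divide powr_diff powr_one)
  have e2: "q * (p / q) = p" using qp by simp
  have "q * phi_alpha a (p / q) = (q * (p / q) powr a - q) / (a * (a - 1)) - (q * (p / q) - q) / (a - 1)"
    using assms by (simp add: phi_eq field_simps)
  also have "\<dots> = (p powr a * q powr (1 - a) - q) / (a * (a - 1)) - (p - q) / (a - 1)"
    by (simp only: e1 e2)
  also have "\<dots> = (q - p powr a * q powr (1 - a)) / (a * (1 - a)) + (p - q) / (1 - a)"
    using assms by (simp add: field_simps)
  finally show ?thesis using False by simp
qed

lemma integrable_geo:
  fixes p q :: "'a \<Rightarrow> real"
  assumes "0 < a" "a < 1"
    and [measurable]: "p \<in> borel_measurable M" "q \<in> borel_measurable M"
    and "\<And>x. p x \<ge> 0" "\<And>x. q x \<ge> 0" "integrable M p" "integrable M q"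
  shows "integrable M (\<lambda>x. p x powr a * q x powr (1 - a))"
proof (rule Bochner_Integration.integrable_bound[where f="\<lambda>x. a * p x + (1 - a) * q x"])
  show "integrable M (\<lambda>x. a * p x + (1 - a) * q x)" using assms by auto
  show "(\<lambda>x. p x powr a * q x powr (1 - a)) \<in> borel_measurable M" by measurable
  show "AE x in M. norm (p x powr a * q x powr (1 - a)) \<le> norm (a * p x + (1 - a) * q x)"
    using young0[of "p _" "q _" a] assms by auto
qed

lemma alpha_div_dens:
  fixes M :: "'a measure" and p q :: "'a \<Rightarrow> real"
  assumes a: "0 < a" "a < 1"
    and pm[measurable]: "p \<in> borel_measurable M" and qm[measurable]: "q \<in> borel_measurable M"
    and pn: "\<And>x. p x \<ge> 0" and qn: "\<And>x. q x \<ge> 0"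
    and ip: "integrable M p" and iq: "integrable M q"
    and p1: "(\<integral>x. p x \<partial>M) = 1" and q1: "(\<integral>x. q x \<partial>M) = 1"
    and ac: "AE x in M. q x = 0 \<longrightarrow> p x = 0"
  shows "alpha_div a (density M (\<lambda>x. ennreal (p x))) (density M (\<lambda>x. ennreal (q x)))
     = ennreal ((1 - (\<integral>x. p x powr a * q x powr (1 - a) \<partial>M)) / (a * (1 - a)))"
proof -
  define N where "N = density M (\<lambda>x. ennreal (q x))"
  define P where "P = density M (\<lambda>x. ennreal (p x))"
  define h where "h x = (if q x = 0 then 0 else p x / q x)" for x
  define G where "G x = p x powr a * q x powr (1 - a)" for x
  define Fn where "Fn x = (q x - G x) / (a * (1 - a)) + (p x - q x) / (1 - a)" for x
  have hm[measurable]: "h \<in> borel_measurable M" unfolding h_def by measurable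
  have hn: "h x \<ge> 0" for x unfolding h_def using pn[of x] qn[of x] by simp
  have ig: "integrable M G"
    unfolding G_def by (rule integrable_geo[OF a(1) a(2) pm qm pn qn ip iq])
  have iF: "integrable M Fn"
    unfolding Fn_def using ig ip iq
    by (intro Bochner_Integration.integrable_add Bochner_Integration.integrable_diff
          Bochner_Integration.integrable_divide_zero)
  have phim[measurable]: "(\<lambda>x. phi_alpha a (h x)) \<in> borel_measurable M"
    by (simp only: phi_eq[OF a]) measurable
  have sN[simp]: "sets N = sets M" unfolding N_def by simp
  have hmN[measurable]: "h \<in> borel_measurable N" by (subst measurable_cong_sets[OF sN refl]) (rule hm)
  have "density N (\<lambda>x. ennreal (h x)) = density M (\<lambda>x. ennreal (q x) * ennreal (h x))"
    unfolding N_def by (rule density_density_eq) auto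
  also have "\<dots> = P"
    unfolding P_def
  proof (rule density_cong)
    show "AE x in M. ennreal (q x) * ennreal (h x) = ennreal (p x)"
      using ac
    proof eventually_elim
      case (elim x)
      have "q x * h x = p x" unfolding h_def using elim by simp
      then show ?case using ennreal_mult'[OF qn[of x], of "h x"] by simp
    qed
  qed auto
  finally have dN: "density N (\<lambda>x. ennreal (h x)) = P" .
  have "emeasure P (space P) = ennreal 1"
    unfolding P_def using ip pn p1
    by (simp add: emeasure_density nn_integral_eq_integral)
  then have "finite_measure P" by (intro finite_measureI) simp
  then have "sigma_finite_measure P" by (simp add: finite_measure_def)
  then have ae: "AE x in N. ennreal (h x) = RN_deriv N P x"
    by (intro RN_deriv_unique_sigma_finite dN) auto
  have "AE x in N. ennreal (phi_alpha a (enn2real (RN_deriv N P x))) = ennreal (phi_alpha a (h x))"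
    using ae
  proof eventually_elim
    case (elim x)
    have "enn2real (RN_deriv N P x) = h x" using elim[symmetric] hn[of x] by simp
    then show ?case by simp
  qed
  then have "alpha_div a P N = (\<integral>\<^sup>+ x. ennreal (phi_alpha a (h x)) \<partial>N)"
    unfolding alpha_div_def by (rule nn_integral_cong_AE)
  also have "\<dots> = (\<integral>\<^sup>+ x. ennreal (q x) * ennreal (phi_alpha a (h x)) \<partial>M)"
    unfolding N_def by (rule nn_integral_density) measurable
  also have "\<dots> = (\<integral>\<^sup>+ x. ennreal (Fn x) \<partial>M)"
  proof (rule nn_integral_cong_AE)
    show "AE x in M. ennreal (q x) * ennreal (phi_alpha a (h x)) = ennreal (Fn x)"
      using ac
    proof eventually_elim
      case (elim x)
      have e: "q x * phi_alpha a (h x) = Fn x"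
        unfolding h_def Fn_def G_def by (rule q_phi) (use a pn qn elim in auto)
      show ?case by (simp only: ennreal_mult'[OF qn[of x], symmetric] e)
    qed
  qed
  also have "\<dots> = ennreal (\<integral>x. Fn x \<partial>M)"
  proof (rule nn_integral_eq_integral[OF iF])
    show "AE x in M. 0 \<le> Fn x"
    proof (rule AE_I2)
      fix x
      have y: "G x \<le> a * p x + (1 - a) * q x"
        unfolding G_def using young0[of "p x" "q x" a] a pn[of x] qn[of x] by simp
      have dd: "(p x - q x) / (1 - a) = a * (p x - q x) / (a * (1 - a))" using a by simp
      have "Fn x = (q x - G x + a * (p x - q x)) / (a * (1 - a))"
        unfolding Fn_def dd by (simp only: add_divide_distrib)
      also have "\<dots> \<ge> 0" using y a by (intro divide_nonneg_pos) (simp_all add: algebra_simps)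
      finally show "0 \<le> Fn x" .
    qed
  qed
  also have "(\<integral>x. Fn x \<partial>M) = (1 - (\<integral>x. G x \<partial>M)) / (a * (1 - a))"
  proof -
    have i1: "integrable M (\<lambda>x. (q x - G x) / (a * (1 - a)))" using ig iq
      by (intro Bochner_Integration.integrable_diff Bochner_Integration.integrable_divide_zero)
    have i2: "integrable M (\<lambda>x. (p x - q x) / (1 - a))" using ip iq
      by (intro Bochner_Integration.integrable_diff Bochner_Integration.integrable_divide_zero)
    have "(\<integral>x. Fn x \<partial>M) = (\<integral>x. (q x - G x) / (a * (1 - a)) \<partial>M) + (\<integral>x. (p x - q x) / (1 - a) \<partial>M)"
      unfolding Fn_def by (rule Bochner_Integration.integral_add[OF i1 i2])
    also have "\<dots> = ((\<integral>x. q x \<partial>M) - (\<integral>x. G x \<partial>M)) / (a * (1 - a))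
        + ((\<integral>x. p x \<partial>M) - (\<integral>x. q x \<partial>M)) / (1 - a)"
      by (simp only: integral_divide_zero Bochner_Integration.integral_diff[OF iq ig]
           Bochner_Integration.integral_diff[OF ip iq])
    also have "\<dots> = (1 - (\<integral>x. G x \<partial>M)) / (a * (1 - a))"
      using p1 q1 by simp
    finally show ?thesis .
  qed
  finally show ?thesis unfolding P_def N_def G_def .
qed

lemma powr_le_self:
  fixes v p :: real
  assumes "0 \<le> v" "v \<le> 1" "1 \<le> p"
  shows "v powr p \<le> v"
proof (cases "v = 0")
  case True then show ?thesis by simp
next
  case False
  then have "v powr p \<le> v powr 1" using powr_mono'[of 1 p v] assms by simp
  then show ?thesis using assms by (simp add: powr_one)
qed

lemma convex_max_powr:
  fixes p :: real
  assumes p: "1 \<le> p"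
  shows "convex_on UNIV (\<lambda>t::real. (max 0 t) powr p)"
  unfolding convex_on_def
proof (intro conjI ballI allI impI)
  show "convex (UNIV :: real set)" by simp
  fix x y u v :: real
  assume u: "0 \<le> u" and v: "0 \<le> v" and uv: "u + v = 1"
  define A where "A = max 0 x"
  define B where "B = max 0 y"
  have A: "0 \<le> A" and B: "0 \<le> B" unfolding A_def B_def by auto
  have "max 0 (u *\<^sub>R x + v *\<^sub>R y) \<le> u * A + v * B"
  proof -
    have "u * x \<le> u * A" unfolding A_def using u by (intro mult_left_mono) auto
    moreover have "v * y \<le> v * B" unfolding B_def using v by (intro mult_left_mono) auto
    moreover have "0 \<le> u * A + v * B" using u v A B by simp
    ultimately show ?thesis by simp
  qed
  then have "(max 0 (u *\<^sub>R x + v *\<^sub>R y)) powr p \<le> (u * A + v * B) powr p"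
    using p by (intro powr_mono2) auto
  also have "\<dots> \<le> u * A powr p + v * B powr p"
  proof (cases "A = 0 \<or> B = 0")
    case True
    then show ?thesis
    proof
      assume "A = 0"
      then have "(u * A + v * B) powr p = v powr p * B powr p" by (simp add: powr_mult)
      also have "\<dots> \<le> v * B powr p"
        using powr_le_self[of v p] v uv u p by (intro mult_right_mono) auto
      finally show ?thesis using \<open>A = 0\<close> by simp
    next
      assume "B = 0"
      then have "(u * A + v * B) powr p = u powr p * A powr p" by (simp add: powr_mult)
      also have "\<dots> \<le> u * A powr p"
        using powr_le_self[of u p] v uv u p by (intro mult_right_mono) auto
      finally show ?thesis using \<open>B = 0\<close> by simp
    qed
  next
    case False
    then have "A \<in> {0<..}" "B \<in> {0<..}" using A B by auto
    then show ?thesis using powr_convex[OF p] u v uv unfolding convex_on_def by auto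
  qed
  finally show "(max 0 (u *\<^sub>R x + v *\<^sub>R y)) powr p \<le> u * (max 0 x) powr p + v * (max 0 y) powr p"
    unfolding A_def B_def .
qed

context sigma_finite_subalgebra
begin

lemma ce_pos_intg:
  assumes fm[measurable]: "f \<in> borel_measurable M" and fi: "integrable M f" and fn: "\<And>x. f x \<ge> 0"
    and wm[measurable]: "w \<in> borel_measurable F" and wi: "integrable M (\<lambda>x. w x * f x)"
  shows "integrable M (\<lambda>x. w x * max 0 (real_cond_exp M F f x))"
    "(\<integral>x. w x * max 0 (real_cond_exp M F f x) \<partial>M) = (\<integral>x. w x * f x \<partial>M)"
proof -
  have wM[measurable]: "w \<in> borel_measurable M" by (rule measurable_from_subalg[OF subalg wm])
  have pos: "AE x in M. real_cond_exp M F f x \<ge> 0"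
    by (rule real_cond_exp_pos) (use fn in auto)
  have ae: "AE x in M. w x * max 0 (real_cond_exp M F f x) = w x * real_cond_exp M F f x"
    using pos by eventually_elim simp
  show "integrable M (\<lambda>x. w x * max 0 (real_cond_exp M F f x))"
    using real_cond_exp_intg(1)[OF wi wm fm] integrable_cong_AE[OF _ _ ae] by simp
  have "(\<integral>x. w x * max 0 (real_cond_exp M F f x) \<partial>M) = (\<integral>x. w x * real_cond_exp M F f x \<partial>M)"
    by (rule integral_cong_AE[OF _ _ ae]) auto
  also have "\<dots> = (\<integral>x. w x * f x \<partial>M)" by (rule real_cond_exp_intg(2)[OF wi wm fm])
  finally show "(\<integral>x. w x * max 0 (real_cond_exp M F f x) \<partial>M) = (\<integral>x. w x * f x \<partial>M)" .
qed

lemma ce_jensen: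
  assumes fm[measurable]: "f \<in> borel_measurable M" and fn: "\<And>x. f x \<ge> 0"
    and a: "0 < a" "a \<le> 1" and fi: "integrable M f" and iX: "integrable M (\<lambda>x. f x powr a)"
  shows "AE x in M. (max 0 (real_cond_exp M F (\<lambda>y. f y powr a) x)) powr (1 / a)
            \<le> max 0 (real_cond_exp M F f x)"
proof -
  define q where "q t = (max 0 t) powr (1 / a)" for t :: real
  have qX: "(\<lambda>y. q (f y powr a)) = f"
  proof
    fix y
    have "q (f y powr a) = f y powr (a * (1 / a))" unfolding q_def by (simp add: powr_powr)
    also have "\<dots> = f y" using a fn[of y] by (simp add: powr_one)
    finally show "q (f y powr a) = f y" .
  qed
  have cq: "convex_on UNIV q" unfolding q_def by (rule convex_max_powr) (use a in simp)
  have qm: "q \<in> borel_measurable borel" unfolding q_def by measurable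
  have "AE x in M. q (real_cond_exp M F (\<lambda>y. f y powr a) x) \<le> real_cond_exp M F (\<lambda>x. q (f x powr a)) x"
    by (rule real_cond_exp_jensens_inequality(2)[OF iX _ _ _ cq qm, where a=0 and b=0])
       (auto simp: qX fi)
  then show ?thesis unfolding qX
    by eventually_elim (auto simp: q_def)
qed

lemma ce_zero:
  assumes fm[measurable]: "f \<in> borel_measurable M" and fi: "integrable M f" and fn: "\<And>x. f x \<ge> 0"
  shows "AE x in M. max 0 (real_cond_exp M F f x) = 0 \<longrightarrow> f x = 0"
proof -
  define S where "S = {x \<in> space M. max 0 (real_cond_exp M F f x) = 0}"
  have SF: "S \<in> sets F"
  proof -
    have "space F = space M" using subalg by (simp add: subalgebra_def)
    moreover have "{x \<in> space F. max 0 (real_cond_exp M F f x) = 0} \<in> sets F" by measurable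
    ultimately show ?thesis unfolding S_def by simp
  qed
  have wm[measurable]: "indicator S \<in> borel_measurable F" using SF by simp
  have wM: "indicator S \<in> borel_measurable M" by (rule measurable_from_subalg[OF subalg wm])
  have wi: "integrable M (\<lambda>x. indicator S x * f x)"
  proof (rule Bochner_Integration.integrable_bound[OF fi])
    show "(\<lambda>x. indicator S x * f x) \<in> borel_measurable M" using wM by measurable
    show "AE x in M. norm (indicator S x * f x) \<le> norm (f x)"
      by (rule AE_I2) (auto simp: indicator_def)
  qed
  have z: "(\<lambda>x. indicator S x * max 0 (real_cond_exp M F f x)) = (\<lambda>x. 0)"
    by (auto simp: S_def indicator_def)
  have "(\<integral>x. indicator S x * f x \<partial>M) = 0"
    using ce_pos_intg(2)[OF fm fi fn wm wi] z by simp
  then have "AE x in M. indicator S x * f x = 0"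
    using integral_nonneg_eq_0_iff_AE[OF wi] fn by (simp add: indicator_def)
  with AE_space show ?thesis
    by eventually_elim (auto simp: S_def indicator_def)
qed

end

lemma powr_le_one_plus: "0 \<le> (x::real) \<Longrightarrow> 0 < a \<Longrightarrow> a \<le> 1 \<Longrightarrow> x powr a \<le> 1 + x"
  by (smt (verit, ccfv_SIG) powr01_less_one powr_eq_0_iff powr_mono powr_one')

theorem proposition2p2:
  fixes \<mu> \<pi> :: "(real ^ 'd) measure"
    and l :: "real ^ 'd \<Rightarrow> real"
    and \<phi> :: "real ^ 'd \<Rightarrow> real ^ 'r"
    and \<alpha> :: real
  assumes "prob_space \<mu>" and "sets \<mu> = sets borel"
    and "prob_space \<pi>"
    and "l \<in> borel_measurable borel" and "integrable \<mu> l" and "\<And>x. l x \<ge> 0"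
    and "\<exists>c>0. \<pi> = density \<mu> (\<lambda>x. ennreal (c * l x))"
    and "\<phi> \<in> borel_measurable borel"
    and "0 < \<alpha>" and "\<alpha> \<le> 1"
  shows "alpha_div \<alpha> \<pi> (pi_opt \<mu> \<phi> l \<alpha>) \<le> alpha_div \<alpha> \<pi> (pi_opt \<mu> \<phi> l 1)
       \<and> alpha_div \<alpha> \<pi> (pi_opt \<mu> \<phi> l 1) \<le> ennreal (1 / \<alpha>) * alpha_div \<alpha> \<pi> (pi_opt \<mu> \<phi> l \<alpha>)"
proof (cases "\<alpha> = 1")
  case True
  then show ?thesis by simp
next
  case False
  then have a: "0 < \<alpha>" "\<alpha> < 1" using assms(9,10) by auto
  note sets_mu = assms(2)
  interpret P: prob_space \<mu> by fact
  have lmb[measurable]: "l \<in> borel_measurable \<mu>"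
    by (subst measurable_cong_sets[OF sets_mu refl]) (rule assms(4))
  have phim: "\<phi> \<in> borel_measurable \<mu>"
    by (subst measurable_cong_sets[OF sets_mu refl]) (rule assms(8))
  define F where "F = vimage_algebra (space \<mu>) \<phi> borel"
  have sub: "subalgebra \<mu> F"
    unfolding subalgebra_def F_def using sets_image_in_sets[OF refl phim] by simp
  interpret S: finite_measure_subalgebra \<mu> F
    by unfold_locales (rule sub)
  have il: "integrable \<mu> l" by fact
  have ln: "\<And>x. l x \<ge> 0" by fact
  obtain c where c: "c > 0" and pi_eq: "\<pi> = density \<mu> (\<lambda>x. ennreal (c * l x))"
    using assms(7) by blast
  have cl1: "c * (\<integral>x. l x \<partial>\<mu>) = 1"
  proof -
    interpret Q: prob_space \<pi> by fact
    have "1 = emeasure \<pi> (space \<pi>)" by (simp add: Q.emeasure_space_1)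
    also have "\<dots> = (\<integral>\<^sup>+x. ennreal (c * l x) \<partial>\<mu>)"
      unfolding pi_eq by (simp add: emeasure_density)
    also have "\<dots> = ennreal (\<integral>x. c * l x \<partial>\<mu>)"
      using il ln c by (intro nn_integral_eq_integral) auto
    finally show ?thesis using c ln il
      by (metis ennreal_eq_1 integral_mult_right_zero)
  qed
  define L where "L a = l_opt \<mu> \<phi> l a" for a
  define Z where "Z a = (\<integral>x. L a x \<partial>\<mu>)" for a
  define g where "g x = max 0 (real_cond_exp \<mu> F (\<lambda>y. l y powr \<alpha>) x)" for x
  have Ldef: "L a x = (max 0 (real_cond_exp \<mu> F (\<lambda>y. l y powr a) x)) powr (1 / a)" for a x
    unfolding L_def l_opt_def F_def ..
  have Lnn: "L a x \<ge> 0" for a x unfolding Ldef by simp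
  have LmF[measurable]: "L a \<in> borel_measurable F" for a
    unfolding Ldef[abs_def] by measurable
  have LmM[measurable]: "L a \<in> borel_measurable \<mu>" for a
    by (rule measurable_from_subalg[OF sub LmF])
  have gmF[measurable]: "g \<in> borel_measurable F" unfolding g_def by measurable
  have ilp: "integrable \<mu> (\<lambda>y. l y powr a)" if "0 < a" "a \<le> 1" for a
  proof (rule Bochner_Integration.integrable_bound[where f="\<lambda>x. 1 + l x"])
    show "integrable \<mu> (\<lambda>x. 1 + l x)" using il by simp
    show "(\<lambda>y. l y powr a) \<in> borel_measurable \<mu>" by measurable
    show "AE x in \<mu>. norm (l x powr a) \<le> norm (1 + l x)"
      using powr_le_one_plus[of "l _" a] ln that by (intro AE_I2) simp
  qed
  have l1: "(\<lambda>y. l y powr 1) = l" using ln by (simp add: powr_one)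
  have L1: "L 1 x = max 0 (real_cond_exp \<mu> F l x)" for x
    unfolding Ldef l1 by (simp add: powr_one)
  have ga: "g x = L \<alpha> x powr \<alpha>" for x
    using a unfolding Ldef g_def by (simp add: powr_powr powr_one)
  have iL1: "integrable \<mu> (L 1)"
    using S.ce_pos_intg(1)[OF lmb il ln, of "\<lambda>_. 1"] il unfolding L1 by simp
  have Z1: "Z 1 = (\<integral>x. l x \<partial>\<mu>)"
    using S.ce_pos_intg(2)[OF lmb il ln, of "\<lambda>_. 1"] il unfolding Z_def L1 by simp
  have jen: "AE x in \<mu>. L \<alpha> x \<le> L 1 x"
    using S.ce_jensen[OF lmb ln a(1) _ il ilp[OF a(1)]] a unfolding Ldef[of \<alpha>] L1 by simp
  have iLa: "integrable \<mu> (L \<alpha>)"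
  proof (rule Bochner_Integration.integrable_bound[OF iL1])
    show "L \<alpha> \<in> borel_measurable \<mu>" by measurable
    show "AE x in \<mu>. norm (L \<alpha> x) \<le> norm (L 1 x)"
      using jen by eventually_elim (simp add: Lnn)
  qed
  have Lz: "AE x in \<mu>. L a x = 0 \<longrightarrow> l x = 0" if "0 < a" "a \<le> 1" for a
  proof -
    have "AE x in \<mu>. max 0 (real_cond_exp \<mu> F (\<lambda>y. l y powr a) x) = 0 \<longrightarrow> l x powr a = 0"
      by (rule S.ce_zero) (use ilp[OF that] in auto)
    then show ?thesis by eventually_elim (simp add: Ldef)
  qed
  have lpos: "(\<integral>x. l x \<partial>\<mu>) > 0"
    using cl1 c by (metis mult_eq_0_iff integral_nonneg_AE ln AE_I2 order_le_less zero_neq_one)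
  have Zpos: "Z a > 0" if "0 < a" "a \<le> 1" "integrable \<mu> (L a)" for a
  proof (rule ccontr)
    assume "\<not> Z a > 0"
    moreover have "Z a \<ge> 0" unfolding Z_def by (rule integral_nonneg_AE) (simp add: Lnn)
    ultimately have "Z a = 0" by simp
    then have "AE x in \<mu>. L a x = 0"
      using integral_nonneg_eq_0_iff_AE[OF that(3)] Lnn unfolding Z_def by simp
    then have "AE x in \<mu>. l x = 0" using Lz[OF that(1,2)] by eventually_elim simp
    then have "(\<integral>x. l x \<partial>\<mu>) = (\<integral>x. 0 \<partial>\<mu>)" by (intro integral_cong_AE) auto
    then show False using lpos by simp
  qed
  define I where "I a = (\<integral>x. (c * l x) powr \<alpha> * (L a x / Z a) powr (1 - \<alpha>) \<partial>\<mu>)" for a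
  have D: "alpha_div \<alpha> \<pi> (pi_opt \<mu> \<phi> l a) = ennreal ((1 - I a) / (\<alpha> * (1 - \<alpha>)))"
    if "0 < a" "a \<le> 1" "integrable \<mu> (L a)" for a
  proof -
    have Zp: "Z a > 0" by (rule Zpos[OF that])
    have po: "pi_opt \<mu> \<phi> l a = density \<mu> (\<lambda>x. ennreal (L a x / Z a))"
      unfolding pi_opt_def L_def Z_def ..
    show ?thesis unfolding po pi_eq I_def
    proof (rule alpha_div_dens[OF a])
      show "(\<lambda>x. c * l x) \<in> borel_measurable \<mu>" by measurable
      show "(\<lambda>x. L a x / Z a) \<in> borel_measurable \<mu>" by measurable
      show "0 \<le> c * l x" for x using c ln[of x] by simp
      show "0 \<le> L a x / Z a" for x using Zp Lnn[of a x] by simp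
      show "integrable \<mu> (\<lambda>x. c * l x)" using il by simp
      show "integrable \<mu> (\<lambda>x. L a x / Z a)" using that(3) by simp
      show "(\<integral>x. c * l x \<partial>\<mu>) = 1" using cl1 by simp
      show "(\<integral>x. L a x / Z a \<partial>\<mu>) = 1" using Zp unfolding Z_def by simp
      show "AE x in \<mu>. L a x / Z a = 0 \<longrightarrow> c * l x = 0"
        using Lz[OF that(1,2)] by eventually_elim (use Zp in simp)
    qed
  qed
  have a1: "\<alpha> \<le> 1" using a by simp
  have Za: "Z \<alpha> > 0" by (rule Zpos[OF a(1) a1 iLa])
  have Z1p: "Z 1 > 0" by (rule Zpos[OF _ _ iL1]) simp_all
  have Z1c: "Z 1 = 1 / c" using Z1 cl1 c by (simp add: field_simps)
  define w where "w a x = c powr \<alpha> * (L a x / Z a) powr (1 - \<alpha>)" for a x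
  have Iw: "I a = (\<integral>x. w a x * g x \<partial>\<mu>)" if "0 < a" "a \<le> 1" "integrable \<mu> (L a)" for a
  proof -
    have Zp: "Z a > 0" by (rule Zpos[OF that])
    have pt: "(\<lambda>x. (c * l x) powr \<alpha> * (L a x / Z a) powr (1 - \<alpha>)) = (\<lambda>x. w a x * l x powr \<alpha>)"
      by (rule ext) (simp add: w_def powr_mult mult_ac)
    have wm: "w a \<in> borel_measurable F" unfolding w_def by measurable
    have "integrable \<mu> (\<lambda>x. (c * l x) powr \<alpha> * (L a x / Z a) powr (1 - \<alpha>))"
    proof (rule integrable_geo[OF a])
      show "(\<lambda>x. c * l x) \<in> borel_measurable \<mu>" by measurable
      show "(\<lambda>x. L a x / Z a) \<in> borel_measurable \<mu>" by measurable
      show "0 \<le> c * l x" for x using c ln[of x] by simp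
      show "0 \<le> L a x / Z a" for x using Zp Lnn[of a x] by simp
      show "integrable \<mu> (\<lambda>x. c * l x)" using il by simp
      show "integrable \<mu> (\<lambda>x. L a x / Z a)" using that(3) by simp
    qed
    then have wi: "integrable \<mu> (\<lambda>x. w a x * l x powr \<alpha>)" unfolding pt .
    have "(\<integral>x. w a x * g x \<partial>\<mu>) = (\<integral>x. w a x * l x powr \<alpha> \<partial>\<mu>)"
      unfolding g_def by (rule S.ce_pos_intg(2)[OF _ ilp[OF a(1) a1] _ wm wi]) auto
    then show ?thesis unfolding I_def pt by simp
  qed
  have pw1: "t powr (1 - \<alpha>) * t powr \<alpha> = t" if "t \<ge> 0" for t :: real
  proof -
    have "t powr (1 - \<alpha>) * t powr \<alpha> = t powr ((1 - \<alpha>) + \<alpha>)" by (rule powr_add[symmetric])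
    also have "(1 - \<alpha>) + \<alpha> = 1" by simp
    finally show ?thesis using that by (simp add: powr_one)
  qed
  have gt: "g x = (L \<alpha> x / Z \<alpha>) powr \<alpha> * Z \<alpha> powr \<alpha>" for x
  proof -
    have "g x = ((L \<alpha> x / Z \<alpha>) * Z \<alpha>) powr \<alpha>" unfolding ga using Za by simp
    then show ?thesis by (simp only: powr_mult)
  qed
  have Ia: "I \<alpha> = c powr \<alpha> * Z \<alpha> powr \<alpha>"
  proof -
    have pt: "w \<alpha> x * g x = c powr \<alpha> * Z \<alpha> powr \<alpha> * (L \<alpha> x / Z \<alpha>)" for x
    proof -
      have t0: "L \<alpha> x / Z \<alpha> \<ge> 0" using Za Lnn[of \<alpha> x] by simp
      have "w \<alpha> x * g x = c powr \<alpha> * Z \<alpha> powr \<alpha> * ((L \<alpha> x / Z \<alpha>) powr (1 - \<alpha>) * (L \<alpha> x / Z \<alpha>) powr \<alpha>)"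
        unfolding w_def gt by (simp only: mult_ac)
      then show ?thesis unfolding pw1[OF t0] .
    qed
    have "I \<alpha> = (\<integral>x. c powr \<alpha> * Z \<alpha> powr \<alpha> * (L \<alpha> x / Z \<alpha>) \<partial>\<mu>)"
      unfolding Iw[OF a(1) a1 iLa] pt ..
    also have "\<dots> = c powr \<alpha> * Z \<alpha> powr \<alpha> * ((\<integral>x. L \<alpha> x \<partial>\<mu>) / Z \<alpha>)"
      by (simp only: integral_mult_right_zero integral_divide_zero)
    also have "\<dots> = c powr \<alpha> * Z \<alpha> powr \<alpha>" using Za unfolding Z_def by simp
    finally show ?thesis .
  qed
  define K where "K x = (L \<alpha> x / Z \<alpha>) powr \<alpha> * (L 1 x / Z 1) powr (1 - \<alpha>)" for x
  have I1: "I 1 = c powr \<alpha> * Z \<alpha> powr \<alpha> * (\<integral>x. K x \<partial>\<mu>)"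
  proof -
    have pt: "w 1 x * g x = c powr \<alpha> * Z \<alpha> powr \<alpha> * K x" for x
      unfolding w_def gt K_def by (simp add: mult_ac)
    have "I 1 = (\<integral>x. c powr \<alpha> * Z \<alpha> powr \<alpha> * K x \<partial>\<mu>)"
      unfolding Iw[OF _ _ iL1, simplified] pt ..
    also have "\<dots> = c powr \<alpha> * Z \<alpha> powr \<alpha> * (\<integral>x. K x \<partial>\<mu>)" by simp
    finally show ?thesis .
  qed
  have iK: "integrable \<mu> K" unfolding K_def
  proof (rule integrable_geo[OF a])
    show "(\<lambda>x. L \<alpha> x / Z \<alpha>) \<in> borel_measurable \<mu>" by measurable
    show "(\<lambda>x. L 1 x / Z 1) \<in> borel_measurable \<mu>" by measurable
    show "0 \<le> L \<alpha> x / Z \<alpha>" for x using Za Lnn[of \<alpha> x] by simp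
    show "0 \<le> L 1 x / Z 1" for x using Z1p Lnn[of 1 x] by simp
    show "integrable \<mu> (\<lambda>x. L \<alpha> x / Z \<alpha>)" using iLa by simp
    show "integrable \<mu> (\<lambda>x. L 1 x / Z 1)" using iL1 by simp
  qed
  have K1: "(\<integral>x. K x \<partial>\<mu>) \<le> 1"
  proof -
    have "(\<integral>x. K x \<partial>\<mu>) \<le> (\<integral>x. \<alpha> * (L \<alpha> x / Z \<alpha>) + (1 - \<alpha>) * (L 1 x / Z 1) \<partial>\<mu>)"
    proof (rule integral_mono[OF iK])
      show "integrable \<mu> (\<lambda>x. \<alpha> * (L \<alpha> x / Z \<alpha>) + (1 - \<alpha>) * (L 1 x / Z 1))"
        using iLa iL1 by simp
      show "K x \<le> \<alpha> * (L \<alpha> x / Z \<alpha>) + (1 - \<alpha>) * (L 1 x / Z 1)" for x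
        unfolding K_def by (rule young0) (use Za Z1p Lnn a in auto)
    qed
    also have "\<dots> = \<alpha> * ((\<integral>x. L \<alpha> x \<partial>\<mu>) / Z \<alpha>) + (1 - \<alpha>) * ((\<integral>x. L 1 x \<partial>\<mu>) / Z 1)"
      using iLa iL1 by simp
    also have "\<dots> = 1" using Za Z1p unfolding Z_def by simp
    finally show ?thesis .
  qed
  have K2: "Z \<alpha> / (Z \<alpha> powr \<alpha> * Z 1 powr (1 - \<alpha>)) \<le> (\<integral>x. K x \<partial>\<mu>)"
  proof -
    define C where "C = Z \<alpha> powr \<alpha> * Z 1 powr (1 - \<alpha>)"
    have C0: "C > 0" unfolding C_def using Za Z1p by simp
    have "(\<integral>x. L \<alpha> x / C \<partial>\<mu>) \<le> (\<integral>x. K x \<partial>\<mu>)"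
    proof (rule integral_mono_AE)
      show "integrable \<mu> (\<lambda>x. L \<alpha> x / C)" using iLa by simp
      show "integrable \<mu> K" by (rule iK)
      show "AE x in \<mu>. L \<alpha> x / C \<le> K x"
        using jen
      proof eventually_elim
        case (elim x)
        define t where "t = L \<alpha> x"
        have t0: "t \<ge> 0" unfolding t_def by (rule Lnn)
        have "t powr \<alpha> * t powr (1 - \<alpha>) = t"
          using t0 by (simp add: powr_add[symmetric] powr_one)
        then have "L \<alpha> x / C = (L \<alpha> x / Z \<alpha>) powr \<alpha> * (L \<alpha> x / Z 1) powr (1 - \<alpha>)"
          unfolding C_def t_def[symmetric] by (simp add: powr_divide)
        also have "\<dots> \<le> K x" unfolding K_def
          using elim Lnn[of \<alpha> x] Za Z1p a
          by (intro mult_left_mono powr_mono2 divide_right_mono) auto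
        finally show ?case .
      qed
    qed
    then show ?thesis unfolding C_def Z_def by simp
  qed
  have ineq1: "I 1 \<le> I \<alpha>"
    unfolding I1 Ia using K1 by (intro mult_left_le) auto
  have ineq2: "I \<alpha> \<le> 1 - \<alpha> + \<alpha> * I 1"
  proof -
    have cz: "c * Z \<alpha> \<le> I 1"
    proof -
      have "c * Z \<alpha> = c powr \<alpha> * Z \<alpha> powr \<alpha> * (Z \<alpha> / (Z \<alpha> powr \<alpha> * Z 1 powr (1 - \<alpha>)))"
      proof -
        have e1: "Z 1 powr (1 - \<alpha>) = 1 / c powr (1 - \<alpha>)" unfolding Z1c using c by (simp add: powr_divide)
        have e2: "c powr \<alpha> * c powr (1 - \<alpha>) = c" using c by (simp add: powr_add[symmetric])
        have zp: "Z \<alpha> powr \<alpha> > 0" using Za by simp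
        have "c powr \<alpha> * Z \<alpha> powr \<alpha> * (Z \<alpha> / (Z \<alpha> powr \<alpha> * Z 1 powr (1 - \<alpha>)))
            = c powr \<alpha> * Z \<alpha> / Z 1 powr (1 - \<alpha>)" using zp by simp
        also have "\<dots> = c powr \<alpha> * c powr (1 - \<alpha>) * Z \<alpha>" unfolding e1 by simp
        also have "\<dots> = c * Z \<alpha>" unfolding e2 ..
        finally show ?thesis by simp
      qed
      also have "\<dots> \<le> I 1" unfolding I1 using K2 Za c by (intro mult_left_mono) auto
      finally show ?thesis .
    qed
    have "I \<alpha> = (c * Z \<alpha>) powr \<alpha> * 1 powr (1 - \<alpha>)" unfolding Ia by (simp add: powr_mult)
    also have "\<dots> \<le> \<alpha> * (c * Z \<alpha>) + (1 - \<alpha>) * 1" by (rule young0) (use c Za a in auto)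
    also have "\<dots> \<le> \<alpha> * I 1 + (1 - \<alpha>)" using cz a by simp
    finally show ?thesis by simp
  qed
  have Da: "alpha_div \<alpha> \<pi> (pi_opt \<mu> \<phi> l \<alpha>) = ennreal ((1 - I \<alpha>) / (\<alpha> * (1 - \<alpha>)))"
    by (rule D[OF a(1) a1 iLa])
  have D1: "alpha_div \<alpha> \<pi> (pi_opt \<mu> \<phi> l 1) = ennreal ((1 - I 1) / (\<alpha> * (1 - \<alpha>)))"
    by (rule D[OF _ _ iL1]) simp_all
  have d0: "\<alpha> * (1 - \<alpha>) > 0" using a by simp
  show ?thesis
  proof
    show "alpha_div \<alpha> \<pi> (pi_opt \<mu> \<phi> l \<alpha>) \<le> alpha_div \<alpha> \<pi> (pi_opt \<mu> \<phi> l 1)"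
      unfolding Da D1 using ineq1 d0 by (intro ennreal_leI divide_right_mono) auto
    have "ennreal (1 / \<alpha>) * alpha_div \<alpha> \<pi> (pi_opt \<mu> \<phi> l \<alpha>)
        = ennreal (1 / \<alpha> * ((1 - I \<alpha>) / (\<alpha> * (1 - \<alpha>))))"
      unfolding Da by (rule ennreal_mult'[symmetric]) (use a in simp)
    moreover have "(1 - I 1) / (\<alpha> * (1 - \<alpha>)) \<le> 1 / \<alpha> * ((1 - I \<alpha>) / (\<alpha> * (1 - \<alpha>)))"
    proof -
      have "(1 - I 1) / (\<alpha> * (1 - \<alpha>)) = (\<alpha> * (1 - I 1)) / (\<alpha> * (\<alpha> * (1 - \<alpha>)))"
        using a by simp
      also have "\<dots> \<le> (1 - I \<alpha>) / (\<alpha> * (\<alpha> * (1 - \<alpha>)))"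
        using ineq2 a by (intro divide_right_mono) (auto simp: algebra_simps)
      also have "\<dots> = 1 / \<alpha> * ((1 - I \<alpha>) / (\<alpha> * (1 - \<alpha>)))" by simp
      finally show ?thesis .
    qed
    ultimately show "alpha_div \<alpha> \<pi> (pi_opt \<mu> \<phi> l 1) \<le> ennreal (1 / \<alpha>) * alpha_div \<alpha> \<pi> (pi_opt \<mu> \<phi> l \<alpha>)"
      unfolding D1 by (simp add: ennreal_leI)
  qed
qed

end
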